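(* A metric space $X$ has asymptotic property $C$ if and only if $\operatorname{trasdim} X<\infty$.
   Context: A family $\mathcal A$ of subsets of a metric space is uniformly bounded if there is $C>0$ with $\operatorname{diam}A\le C$ for all $A\in\mathcal A$; it is $r$-disjoint if $d(A_1,A_2)\ge r$ for all distinct $A_1,A_2\in\mathcal A$. For a set $L$, $\mathrm{Fin}\,L$ is the collection of finite nonempty subsets of $L$. For $M\subset \mathrm{Fin}\,L$ and $\sigma\in\{\emptyset\}\cup\mathrm{Fin}\,L$, $M^\sigma=\{\tau\in\mathrm{Fin}\,L:\sigma\cup\tau\in M,\ \sigma\cap\tau=\emptyset\}$, and $M^a=M^{\{a\}}$. The ordinal $\operatorname{Ord}M$ is defined inductively: $\operatorname{Ord}M=0$ iff $M=\emptyset$; $\operatorname{Ord}M\le\alpha$ iff $\operatorname{Ord}M^a<\alpha$ for every $a\in L$; $\operatorname{Ord}M=\alpha$ iff $\operatorname{Ord}M\le\alpha$ and not $\operatorname{Ord}M<\alpha$; $\operatorname{Ord}M=\infty$ iff $\operatorname{Ord} M\le\alpha$ for no ordinal $\alpha$. For a metric space $(X,d)$, $A(X,d)$ is the set of $\sigma\in\mathrm{Fin}\,\mathbb N$ such that there do NOT exist uniformly bounded families $\mathcal V_i$, $i\in\sigma$, with $\bigcup_{i\in\sigma}\mathcal V_i$ covering $X$ and each $\mathcal V_i$ being $i$-disjoint. Define $\operatorname{trasdim}X=\operatorname{Ord}A(X,d)$, except $\operatorname{trasdim}X=-1$ iff $X$ is bounded. $X$ has asymptotic property $C$ if for every sequence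 of natural numbers $n_1<n_2<\cdots$ there exist $n\in\mathbb N$ and uniformly bounded families $\mathcal U_1,\dots,\mathcal U_n$ such that $\bigcup_{i=1}^n\mathcal U_i$ covers $X$ and each $\mathcal U_i$ is $n_i$-disjoint. *)

theory Defs
  imports "HOL-Analysis.Analysis"
begin

definition Nat1 :: "nat set" where "Nat1 = {n. n \<ge> 1}"

definition Fin :: "'l set \<Rightarrow> 'l set set" where
  "Fin L = {\<sigma>. finite \<sigma> \<and> \<sigma> \<noteq> {} \<and> \<sigma> \<subseteq> L}"

definition deriv :: "'l set \<Rightarrow> 'l set set \<Rightarrow> 'l \<Rightarrow> 'l set set" where
  "deriv L M a = {\<tau>. \<tau> \<in> Fin L \<and> {a} \<union> \<tau> \<in> M \<and> {a} \<inter> \<tau> = {}}"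

text \<open>ord_finite L M means Ord M \<noteq> \<infinity>, i.e. Ord M \<le> \<alpha> for some ordinal \<alpha>.
  By the inductive definition of Ord, this is exactly the least predicate that holds
  for M = {} (Ord M = 0) and holds for M whenever it holds for all M^a, a \<in> L
  (then Ord M \<le> sup (Ord M^a + 1)).\<close>
inductive ord_finite :: "'l set \<Rightarrow> 'l set set \<Rightarrow> bool" for L where
  ord_empty: "M = {} \<Longrightarrow> ord_finite L M"
| ord_step: "(\<forall>a\<in>L. ord_finite L (deriv L M a)) \<Longrightarrow> ord_finite L M"

definition unif_bounded :: "('a \<Rightarrow> 'a \<Rightarrow> real) \<Rightarrow> 'a set set \<Rightarrow> bool" where
  "unif_bounded d \<V> \<longleftrightarrow> (\<exists>C>0. \<forall>A\<in>\<V>. \<forall>x\<in>A. \<forall>y\<in>A. d x y \<le> C)"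

definition r_disjoint :: "('a \<Rightarrow> 'a \<Rightarrow> real) \<Rightarrow> real \<Rightarrow> 'a set set \<Rightarrow> bool" where
  "r_disjoint d r \<V> \<longleftrightarrow>
     (\<forall>A1\<in>\<V>. \<forall>A2\<in>\<V>. A1 \<noteq> A2 \<longrightarrow> (\<forall>x\<in>A1. \<forall>y\<in>A2. d x y \<ge> r))"

definition A_set :: "'a set \<Rightarrow> ('a \<Rightarrow> 'a \<Rightarrow> real) \<Rightarrow> nat set set" where
  "A_set X d = {\<sigma>. \<sigma> \<in> Fin Nat1 \<and>
     \<not> (\<exists>\<V> :: nat \<Rightarrow> 'a set set.
          (\<forall>i\<in>\<sigma>. \<V> i \<subseteq> Pow X \<and> unif_bounded d (\<V> i) \<and> r_disjoint d (real i) (\<V> i))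
          \<and> X \<subseteq> (\<Union>i\<in>\<sigma>. \<Union>(\<V> i)))}"

definition bounded_space :: "'a set \<Rightarrow> ('a \<Rightarrow> 'a \<Rightarrow> real) \<Rightarrow> bool" where
  "bounded_space X d \<longleftrightarrow> (\<exists>C. \<forall>x\<in>X. \<forall>y\<in>X. d x y \<le> C)"

text \<open>trasdim X < \<infinity>: either X is bounded (trasdim = -1) or Ord A(X,d) is an ordinal.\<close>
definition trasdim_finite :: "'a set \<Rightarrow> ('a \<Rightarrow> 'a \<Rightarrow> real) \<Rightarrow> bool" where
  "trasdim_finite X d \<longleftrightarrow> bounded_space X d \<or> ord_finite Nat1 (A_set X d)"

text \<open>Asymptotic property C; the sequence n_1 < n_2 < ... is n 1 < n 2 < ..., families U_1..U_k.\<close>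
definition asymptotic_C :: "'a set \<Rightarrow> ('a \<Rightarrow> 'a \<Rightarrow> real) \<Rightarrow> bool" where
  "asymptotic_C X d \<longleftrightarrow>
     (\<forall>n :: nat \<Rightarrow> nat. strict_mono n \<and> n 1 \<ge> 1 \<longrightarrow>
        (\<exists>k \<ge> 1. \<exists>\<U> :: nat \<Rightarrow> 'a set set.
           (\<forall>i\<in>{1..k}. \<U> i \<subseteq> Pow X \<and> unif_bounded d (\<U> i) \<and> r_disjoint d (real (n i)) (\<U> i))
           \<and> X \<subseteq> (\<Union>i\<in>{1..k}. \<Union>(\<U> i))))"

end

theory Submission
  imports Defs
begin

lemma ord_finite_no_seq:
  assumes "ord_finite L M"
  shows "\<forall>a :: nat \<Rightarrow> _. inj a \<longrightarrow> range a \<subseteq> L \<longrightarrow> (\<exists>k\<ge>1. a ` {..<k} \<notin> M)"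
  using assms
proof (induction rule: ord_finite.induct)
  case (ord_empty M)
  then show ?case by (intro allI impI exI[of _ "1::nat"]) simp
next
  case (ord_step M)
  show ?case
  proof (intro allI impI)
    fix a :: "nat \<Rightarrow> 'a" assume ia: "inj a" and ra: "range a \<subseteq> L"
    have a0: "a 0 \<in> L" using ra by auto
    have IH: "\<forall>b :: nat \<Rightarrow> 'a. inj b \<longrightarrow> range b \<subseteq> L \<longrightarrow> (\<exists>k\<ge>1. b ` {..<k} \<notin> deriv L M (a 0))"
      using bspec[OF ord_step a0] by simp
    have i2: "inj (a \<circ> Suc)" using inj_compose[OF ia inj_Suc] .
    have r2: "range (a \<circ> Suc) \<subseteq> L" using ra by auto
    have "\<exists>k\<ge>1. (a \<circ> Suc) ` {..<k} \<notin> deriv L M (a 0)"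
      using mp[OF mp[OF spec[OF IH, of "a \<circ> Suc"] i2] r2] .
    then obtain k where k: "k \<ge> 1" "(a \<circ> Suc) ` {..<k} \<notin> deriv L M (a 0)"
      by (elim exE conjE) (rule that; assumption)
    have eq: "a ` {..<Suc k} = {a 0} \<union> (a \<circ> Suc) ` {..<k}"
      by (simp add: lessThan_Suc_eq_insert_0 image_image)
    have "0 \<in> {..<k}" using k(1) by simp
    then have fin: "(a \<circ> Suc) ` {..<k} \<in> Fin L" using r2 unfolding Fin_def by auto
    have dis: "{a 0} \<inter> (a \<circ> Suc) ` {..<k} = {}" using ia by (auto simp: inj_def)
    have "a ` {..<Suc k} \<notin> M"
      using k(2) fin dis eq unfolding deriv_def by auto
    then show "\<exists>k\<ge>1. a ` {..<k} \<notin> M" by (intro exI[of _ "Suc k"]) auto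
  qed
qed

lemma not_ord_finite_seq:
  assumes "\<not> ord_finite L M"
  shows "\<exists>a :: nat \<Rightarrow> _. inj a \<and> range a \<subseteq> L \<and> (\<forall>m. \<exists>T\<in>M. a ` {..<m} \<subseteq> T)"
proof -
  have step: "N \<noteq> {} \<and> (\<exists>x\<in>L. \<not> ord_finite L (deriv L N x))" if nN: "\<not> ord_finite L N" for N
  proof
    show "N \<noteq> {}"
    proof
      assume "N = {}"
      then have "ord_finite L N" by (rule ord_finite.ord_empty)
      with nN show False by simp
    qed
    show "\<exists>x\<in>L. \<not> ord_finite L (deriv L N x)"
    proof (rule ccontr)
      assume "\<not> (\<exists>x\<in>L. \<not> ord_finite L (deriv L N x))"
      then have "\<forall>x\<in>L. ord_finite L (deriv L N x)" by simp
      then have "ord_finite L N" by (rule ord_finite.ord_step)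
      with nN show False by simp
    qed
  qed
  define f where "f N = (SOME x. x \<in> L \<and> \<not> ord_finite L (deriv L N x))" for N
  define Ms where "Ms k = ((\<lambda>N. deriv L N (f N)) ^^ k) M" for k
  define a where "a k = f (Ms k)" for k
  have Ms_Suc: "Ms (Suc k) = deriv L (Ms k) (a k)" for k by (simp add: Ms_def a_def)
  have fprop: "f N \<in> L \<and> \<not> ord_finite L (deriv L N (f N))" if "\<not> ord_finite L N" for N
  proof -
    have "\<exists>x. x \<in> L \<and> \<not> ord_finite L (deriv L N x)" using step[OF that] by blast
    then show ?thesis unfolding f_def by (rule someI_ex)
  qed
  have nf: "\<not> ord_finite L (Ms k)" for k
  proof (induction k)
    case 0 then show ?case using assms by (simp add: Ms_def)
  next
    case (Suc k) then show ?case using fprop[OF Suc] by (simp add: Ms_Suc a_def)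
  qed
  have aL: "a k \<in> L" for k using fprop[OF nf[of k]] by (simp add: a_def)
  have ne: "Ms k \<noteq> {}" for k using step[OF nf[of k]] by blast
  have claim: "\<tau> \<union> a ` {..<k} \<in> M \<and> \<tau> \<inter> a ` {..<k} = {}" if "\<tau> \<in> Ms k" for \<tau> k
    using that
  proof (induction k arbitrary: \<tau>)
    case 0 then show ?case by (simp add: Ms_def)
  next
    case (Suc k)
    then have h: "insert (a k) \<tau> \<in> Ms k" "a k \<notin> \<tau>" by (auto simp: Ms_Suc deriv_def)
    from Suc.IH[OF h(1)] h(2) show ?case by (auto simp: lessThan_Suc)
  qed
  have notin: "a k \<notin> a ` {..<k}" for k
  proof -
    obtain \<tau> where "\<tau> \<in> Ms (Suc k)" using ne[of "Suc k"] by blast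
    then have "insert (a k) \<tau> \<in> Ms k" by (auto simp: Ms_Suc deriv_def)
    from claim[OF this] show ?thesis by auto
  qed
  have "inj a"
  proof (rule injI, rule ccontr)
    fix i j assume "a i = a j" "i \<noteq> j"
    then consider "i < j" | "j < i" by linarith
    then show False
    proof cases
      case 1
      then have "a i \<in> a ` {..<j}" by simp
      with notin[of j] \<open>a i = a j\<close> show False by simp
    next
      case 2
      then have "a j \<in> a ` {..<i}" by simp
      with notin[of i] \<open>a i = a j\<close> show False by simp
    qed
  qed
  moreover have "range a \<subseteq> L" using aL by auto
  moreover have "\<forall>m. \<exists>T\<in>M. a ` {..<m} \<subseteq> T"
  proof
    fix m obtain \<tau> where "\<tau> \<in> Ms m" using ne[of m] by blast
    from claim[OF this] show "\<exists>T\<in>M. a ` {..<m} \<subseteq> T" by blast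
  qed
  ultimately show ?thesis by blast
qed

lemma A_set_notin:
  assumes "\<sigma> \<in> Fin Nat1"
  shows "\<sigma> \<notin> A_set X d \<longleftrightarrow> (\<exists>\<V> :: nat \<Rightarrow> 'a set set.
          (\<forall>i\<in>\<sigma>. \<V> i \<subseteq> Pow X \<and> unif_bounded d (\<V> i) \<and> r_disjoint d (real i) (\<V> i))
          \<and> X \<subseteq> (\<Union>i\<in>\<sigma>. \<Union>(\<V> i)))"
  using assms unfolding A_set_def mem_Collect_eq by (simp only: simp_thms)

lemma A_down:
  assumes "T \<in> A_set X d" "\<sigma> \<subseteq> T" "\<sigma> \<in> Fin Nat1"
  shows "\<sigma> \<in> A_set X d"
proof (rule ccontr)
  assume "\<sigma> \<notin> A_set X d"
  then have "\<exists>\<V> :: nat \<Rightarrow> 'a set set.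
          (\<forall>i\<in>\<sigma>. \<V> i \<subseteq> Pow X \<and> unif_bounded d (\<V> i) \<and> r_disjoint d (real i) (\<V> i))
          \<and> X \<subseteq> (\<Union>i\<in>\<sigma>. \<Union>(\<V> i))"
    using A_set_notin[OF assms(3), of X d] by (rule iffD1[rotated])
  then obtain V :: "nat \<Rightarrow> 'a set set" where
    V: "\<forall>i\<in>\<sigma>. V i \<subseteq> Pow X \<and> unif_bounded d (V i) \<and> r_disjoint d (real i) (V i)"
       "X \<subseteq> (\<Union>i\<in>\<sigma>. \<Union>(V i))"
    by (elim exE conjE) (rule that; assumption)
  define V' where "V' i = (if i \<in> \<sigma> then V i else {})" for i
  have ub: "unif_bounded d {}" unfolding unif_bounded_def by (intro exI[of _ "1::real"]) simp
  have rd: "r_disjoint d r {}" for r unfolding r_disjoint_def by simp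
  have "\<forall>i\<in>T. V' i \<subseteq> Pow X \<and> unif_bounded d (V' i) \<and> r_disjoint d (real i) (V' i)"
    using V(1) ub rd by (simp add: V'_def)
  moreover have "X \<subseteq> (\<Union>i\<in>T. \<Union>(V' i))"
  proof
    fix x assume "x \<in> X"
    then have "x \<in> (\<Union>i\<in>\<sigma>. \<Union>(V i))" using V(2) by (rule subsetD[rotated])
    then obtain i where i: "i \<in> \<sigma>" "x \<in> \<Union>(V i)" by blast
    then have "x \<in> \<Union>(V' i)" by (simp add: V'_def)
    moreover have "i \<in> T" using i(1) assms(2) by blast
    ultimately show "x \<in> (\<Union>i\<in>T. \<Union>(V' i))" by blast
  qed
  ultimately have "\<exists>\<V> :: nat \<Rightarrow> 'a set set.
          (\<forall>i\<in>T. \<V> i \<subseteq> Pow X \<and> unif_bounded d (\<V> i) \<and> r_disjoint d (real i) (\<V> i))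
          \<and> X \<subseteq> (\<Union>i\<in>T. \<Union>(\<V> i))" by (intro exI[of _ V'] conjI)
  note exV = this
  have Tfin: "T \<in> Fin Nat1" using assms(1) unfolding A_set_def by blast
  have "T \<notin> A_set X d" using exV A_set_notin[OF Tfin, of X d] by (rule iffD2[rotated])
  with assms(1) show False by simp
qed

theorem proposition1:
  assumes "Metric_space X d"
  shows "asymptotic_C X d \<longleftrightarrow> trasdim_finite X d"
proof
  assume aC: "asymptotic_C X d"
  show "trasdim_finite X d"
    unfolding trasdim_finite_def
  proof (rule disjI2, rule ccontr)
    assume "\<not> ord_finite Nat1 (A_set X d)"
    from not_ord_finite_seq[OF this] obtain a :: "nat \<Rightarrow> nat" where
      a: "inj a" "range a \<subseteq> Nat1" "\<forall>m. \<exists>T\<in>A_set X d. a ` {..<m} \<subseteq> T" by blast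
    define S where "S = range a"
    have infS: "infinite S" using a(1) S_def range_inj_infinite by blast
    define n where "n = enumerate S"
    have sm: "strict_mono n" using infS by (simp add: n_def strict_mono_enumerate)
    have "n 0 < n 1" using sm by (simp add: strict_mono_def)
    then have n1: "n 1 \<ge> 1" by simp
    have ex: "\<exists>k \<ge> 1. \<exists>\<U> :: nat \<Rightarrow> 'a set set.
           (\<forall>i\<in>{1..k}. \<U> i \<subseteq> Pow X \<and> unif_bounded d (\<U> i) \<and> r_disjoint d (real (n i)) (\<U> i))
           \<and> X \<subseteq> (\<Union>i\<in>{1..k}. \<Union>(\<U> i))"
      using mp[OF spec[OF aC[unfolded asymptotic_C_def], of n] conjI[OF sm n1]] .
    from ex obtain k U where kU: "k \<ge> 1"
      "\<forall>i\<in>{1..k}. U i \<subseteq> Pow X \<and> unif_bounded d (U i) \<and> r_disjoint d (real (n i)) (U i)"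
      "X \<subseteq> (\<Union>i\<in>{1..k}. \<Union>(U i))"
      by (elim exE conjE) (rule that; assumption)
    define \<sigma> where "\<sigma> = n ` {1..k}"
    have sS: "\<sigma> \<subseteq> S" using infS by (auto simp: \<sigma>_def n_def enumerate_in_set)
    have fs: "finite \<sigma>" by (simp add: \<sigma>_def)
    obtain C where C: "C \<subseteq> UNIV" "finite C" "\<sigma> = a ` C"
      using finite_subset_image[OF fs sS[unfolded S_def]] by blast
    obtain m where "C \<subseteq> {..<m}" using finite_nat_bounded[OF C(2)] by blast
    then have sub: "\<sigma> \<subseteq> a ` {..<m}" using C(3) by auto
    obtain T where T: "T \<in> A_set X d" "a ` {..<m} \<subseteq> T" using a(3) by blast
    have sF: "\<sigma> \<in> Fin Nat1" using fs kU(1) sS a(2) unfolding Fin_def S_def \<sigma>_def by auto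
    have sA: "\<sigma> \<in> A_set X d" using A_down[OF T(1) _ sF] sub T(2) by blast
    have injn: "inj n" using sm strict_mono_imp_inj_on by blast
    define V where "V j = U (inv n j)" for j
    have Vn: "V (n i) = U i" for i unfolding V_def using injn by (simp add: inv_f_f)
    have "\<forall>j\<in>\<sigma>. V j \<subseteq> Pow X \<and> unif_bounded d (V j) \<and> r_disjoint d (real j) (V j)"
      using kU(2) Vn by (auto simp: \<sigma>_def)
    moreover have "X \<subseteq> (\<Union>j\<in>\<sigma>. \<Union>(V j))" using kU(3) Vn by (auto simp: \<sigma>_def)
    ultimately show False using sA unfolding A_set_def by blast
  qed
next
  assume tf: "trasdim_finite X d"
  show "asymptotic_C X d"
    unfolding asymptotic_C_def
  proof (intro allI impI)
    fix n :: "nat \<Rightarrow> nat" assume nh: "strict_mono n \<and> n 1 \<ge> 1"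
    show "\<exists>k\<ge>1. \<exists>\<U> :: nat \<Rightarrow> 'a set set.
           (\<forall>i\<in>{1..k}. \<U> i \<subseteq> Pow X \<and> unif_bounded d (\<U> i) \<and> r_disjoint d (real (n i)) (\<U> i))
           \<and> X \<subseteq> (\<Union>i\<in>{1..k}. \<Union>(\<U> i))"
    proof (cases "bounded_space X d")
      case True
      then obtain C where C: "\<forall>x\<in>X. \<forall>y\<in>X. d x y \<le> C" unfolding bounded_space_def by blast
      have C': "\<forall>x\<in>X. \<forall>y\<in>X. d x y \<le> max C 1" using C by (meson max.coboundedI1)
      have "unif_bounded d {X}" unfolding unif_bounded_def
        using C' by (intro exI[of _ "max C 1"]) simp
      then show ?thesis
        by (intro exI[of _ "1::nat"] conjI exI[of _ "\<lambda>_. {X}"]) (auto simp: r_disjoint_def)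
    next
      case False
      then have of: "ord_finite Nat1 (A_set X d)" using tf unfolding trasdim_finite_def by blast
      define a where "a i = n (Suc i)" for i
      have sm: "strict_mono n" using nh by blast
      have ia: "inj a" unfolding a_def using strict_mono_imp_inj_on[OF sm] by (auto simp: inj_def)
      have ra: "range a \<subseteq> Nat1"
      proof
        fix x assume "x \<in> range a"
        then obtain i where "x = n (Suc i)" by (auto simp: a_def)
        moreover have "n 1 \<le> n (Suc i)" using sm by (simp add: strict_mono_less_eq)
        ultimately show "x \<in> Nat1" using nh by (simp add: Nat1_def)
      qed
      have exk: "\<exists>k\<ge>1. a ` {..<k} \<notin> A_set X d"
        using mp[OF mp[OF spec[OF ord_finite_no_seq[OF of], of a] ia] ra] .
      then obtain k where k: "k \<ge> 1" "a ` {..<k} \<notin> A_set X d"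
        by (elim exE conjE) (rule that; assumption)
      have "0 \<in> {..<k}" using k(1) by simp
      then have F: "a ` {..<k} \<in> Fin Nat1" using ra unfolding Fin_def by auto
      have "\<exists>V :: nat \<Rightarrow> 'a set set. (\<forall>i\<in>a ` {..<k}. V i \<subseteq> Pow X \<and> unif_bounded d (V i) \<and> r_disjoint d (real i) (V i))
           \<and> X \<subseteq> (\<Union>i\<in>a ` {..<k}. \<Union>(V i))"
        using k(2) F unfolding A_set_def mem_Collect_eq by blast
      then obtain V :: "nat \<Rightarrow> 'a set set" where
        V: "\<forall>i\<in>a ` {..<k}. V i \<subseteq> Pow X \<and> unif_bounded d (V i) \<and> r_disjoint d (real i) (V i)"
           "X \<subseteq> (\<Union>i\<in>a ` {..<k}. \<Union>(V i))"
        by (elim exE conjE) (rule that; assumption)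
      have mem: "n i \<in> a ` {..<k}" if "i \<in> {1..k}" for i
        using that by (intro image_eqI[of _ _ "i - 1"]) (auto simp: a_def)
      have "\<forall>i\<in>{1..k}. V (n i) \<subseteq> Pow X \<and> unif_bounded d (V (n i)) \<and> r_disjoint d (real (n i)) (V (n i))"
        using bspec[OF V(1) mem] by simp
      moreover have "X \<subseteq> (\<Union>i\<in>{1..k}. \<Union>(V (n i)))"
      proof
        fix x assume "x \<in> X"
        then have "x \<in> (\<Union>i\<in>a ` {..<k}. \<Union>(V i))" using V(2) by (rule subsetD[rotated])
        then obtain j where "j < k" "x \<in> \<Union>(V (a j))" by auto
        then show "x \<in> (\<Union>i\<in>{1..k}. \<Union>(V (n i)))"
          by (intro UN_I[of "Suc j"]) (auto simp: a_def)
      qed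
      ultimately show ?thesis using k(1) by (intro exI[of _ k] conjI exI[of _ "\<lambda>i. V (n i)"]) simp_all
    qed
  qed
qed

end
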